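(* Let $q$ be a prime power, $t$ an integer with $2\le t<q$, and $d$ a non-negative integer. Then there exists an $\left(\left\lfloor \frac{q-d}{t-1}\right\rfloor;d\right)$-CFF$(q^2+q,\,q^t)$.
   Context: A set system $(X,\mathcal F)$ (a finite point set $X$ and a set $\mathcal F$ of subsets called blocks) is an $(r;d)$-CFF$(N,T)$ if $|X|=N$, $|\mathcal F|=T$, and for any block $B_0\in\mathcal F$ and any $r$ other blocks $A_1,\dots,A_r\in\mathcal F\setminus\{B_0\}$ we have $\left|B_0\setminus\bigcup_{j=1}^r A_j\right|>d$. *)

theory Defs
  imports Complex_Main "HOL-Number_Theory.Prime_Powers"
begin

definition cff :: "nat \<Rightarrow> nat \<Rightarrow> 'a set \<Rightarrow> 'a set set \<Rightarrow> nat \<Rightarrow> nat \<Rightarrow> bool" where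
  "cff r d X F N T \<longleftrightarrow>
     finite X \<and> (\<forall>B\<in>F. B \<subseteq> X) \<and> card X = N \<and> card F = T \<and>
     (\<forall>B0\<in>F. \<forall>A :: nat \<Rightarrow> 'a set. (\<forall>j<r. A j \<in> F - {B0}) \<longrightarrow>
        card (B0 - (\<Union>j<r. A j)) > d)"

end

theory Submission
  imports Defs "HOL-Algebra.Algebraic_Closure" "HOL-Number_Theory.Residues"
begin


lemma (in cring) binomial_expand:
  assumes x: "x \<in> carrier R" and y: "y \<in> carrier R"
  shows "(x \<oplus> y) [^] (n::nat) = (\<Oplus>k\<in>{..n}. [(n choose k)] \<cdot> (x [^] k \<otimes> y [^] (n - k)))"
proof (induction n)
  case 0
  then show ?case using x y by simp
next
  case (Suc n)
  define m where "m = (\<lambda>k. x [^] k \<otimes> y [^] (Suc n - k))"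
  have mc: "\<And>k. m k \<in> carrier R" using x y by (simp add: m_def)
  have S1: "(\<Oplus>k\<in>{..n}. [(n choose k)] \<cdot> (x [^] k \<otimes> y [^] (n - k))) \<otimes> y
     = (\<Oplus>k\<in>{..n}. [(n choose k)] \<cdot> m k)"
  proof -
    have "(\<Oplus>k\<in>{..n}. [(n choose k)] \<cdot> (x [^] k \<otimes> y [^] (n - k))) \<otimes> y
       = (\<Oplus>k\<in>{..n}. [(n choose k)] \<cdot> (x [^] k \<otimes> y [^] (n - k)) \<otimes> y)"
      using x y by (intro finsum_ldistr) auto
    also have "\<dots> = (\<Oplus>k\<in>{..n}. [(n choose k)] \<cdot> m k)"
    proof (intro finsum_cong')
      fix k assume k: "k \<in> {..n}"
      have "Suc n - k = Suc (n - k)" using k by auto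
      then have "m k = x [^] k \<otimes> (y [^] (n - k) \<otimes> y)" using x y by (simp add: m_def)
      then show "[(n choose k)] \<cdot> (x [^] k \<otimes> y [^] (n - k)) \<otimes> y = [(n choose k)] \<cdot> m k"
        using x y by (simp add: add_pow_ldistr m_assoc)
    qed (use mc in auto)
    finally show ?thesis .
  qed
  have S2: "(\<Oplus>k\<in>{..n}. [(n choose k)] \<cdot> (x [^] k \<otimes> y [^] (n - k))) \<otimes> x
     = (\<Oplus>k\<in>{..n}. [(n choose k)] \<cdot> m (Suc k))"
  proof -
    have "(\<Oplus>k\<in>{..n}. [(n choose k)] \<cdot> (x [^] k \<otimes> y [^] (n - k))) \<otimes> x
       = (\<Oplus>k\<in>{..n}. [(n choose k)] \<cdot> (x [^] k \<otimes> y [^] (n - k)) \<otimes> x)"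
      using x y by (intro finsum_ldistr) auto
    also have "\<dots> = (\<Oplus>k\<in>{..n}. [(n choose k)] \<cdot> m (Suc k))"
    proof (intro finsum_cong')
      fix k assume k: "k \<in> {..n}"
      have "m (Suc k) = (x [^] k \<otimes> x) \<otimes> y [^] (n - k)" using x y by (simp add: m_def)
      also have "\<dots> = (x [^] k \<otimes> y [^] (n - k)) \<otimes> x" using x y by (metis m_assoc m_comm nat_pow_closed)
      finally show "[(n choose k)] \<cdot> (x [^] k \<otimes> y [^] (n - k)) \<otimes> x = [(n choose k)] \<cdot> m (Suc k)"
        using x y by (simp add: add_pow_ldistr)
    qed (use mc in auto)
    finally show ?thesis .
  qed
  have "(x \<oplus> y) [^] Suc n = (\<Oplus>k\<in>{..n}. [(n choose k)] \<cdot> (x [^] k \<otimes> y [^] (n - k))) \<otimes> (x \<oplus> y)"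
    using Suc by simp
  also have "\<dots> = (\<Oplus>k\<in>{..n}. [(n choose k)] \<cdot> m (Suc k)) \<oplus> (\<Oplus>k\<in>{..n}. [(n choose k)] \<cdot> m k)"
    using S1 S2 x y by (simp add: r_distr)
  also have "(\<Oplus>k\<in>{..n}. [(n choose k)] \<cdot> m (Suc k)) = (\<Oplus>k\<in>{..Suc n}. [(if k = 0 then 0 else n choose (k - 1))] \<cdot> m k)"
    using mc by (subst finsum_Suc2) auto
  also have "(\<Oplus>k\<in>{..n}. [(n choose k)] \<cdot> m k) = (\<Oplus>k\<in>{..Suc n}. [(n choose k)] \<cdot> m k)"
    using mc by (subst finsum_Suc) (auto simp: binomial_eq_0)
  also have "(\<Oplus>k\<in>{..Suc n}. [(if k = 0 then 0 else n choose (k - 1))] \<cdot> m k) \<oplus> (\<Oplus>k\<in>{..Suc n}. [(n choose k)] \<cdot> m k)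
     = (\<Oplus>k\<in>{..Suc n}. [(if k = 0 then 0 else n choose (k - 1))] \<cdot> m k \<oplus> [(n choose k)] \<cdot> m k)"
    using mc by (subst finsum_addf) auto
  also have "\<dots> = (\<Oplus>k\<in>{..Suc n}. [(Suc n choose k)] \<cdot> m k)"
  proof (intro finsum_cong')
    fix k assume "k \<in> {..Suc n}"
    have "(if k = 0 then 0 else n choose (k - 1)) + (n choose k) = Suc n choose k"
      by (cases k) auto
    then show "[(if k = 0 then 0 else n choose (k - 1))] \<cdot> m k \<oplus> [(n choose k)] \<cdot> m k = [(Suc n choose k)] \<cdot> m k"
      using mc by (metis add.nat_pow_mult)
  qed (use mc in auto)
  finally show ?case by (simp add: m_def)
qed


lemma (in cring) char_zero_mult:
  assumes "[(p::nat)] \<cdot> \<one> = \<zero>" "z \<in> carrier R" "p dvd m"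
  shows "[m] \<cdot> z = \<zero>"
proof -
  obtain c where m: "m = p * c" using assms(3) by auto
  have "[p] \<cdot> z = \<zero>"
    using assms(1,2) add_pow_ldistr[of \<one> z p] by simp
  then have "[c] \<cdot> ([p] \<cdot> z) = \<zero>" by simp
  then show ?thesis using assms(2) by (simp add: m add.nat_pow_pow mult.commute)
qed

lemma (in cring) frobenius:
  assumes p: "Factorial_Ring.prime p" and ch: "[(p::nat)] \<cdot> \<one> = \<zero>" and x: "x \<in> carrier R" and y: "y \<in> carrier R"
  shows "(x \<oplus> y) [^] p = x [^] p \<oplus> y [^] p"
proof -
  have p0: "p \<noteq> 0" using p by auto
  have "(x \<oplus> y) [^] p = (\<Oplus>k\<in>{..p}. [(p choose k)] \<cdot> (x [^] k \<otimes> y [^] (p - k)))"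
    using binomial_expand[OF x y] .
  also have "\<dots> = (\<Oplus>k\<in>{..p}. (if k = 0 then y [^] p else \<zero>) \<oplus> (if k = p then x [^] p else \<zero>))"
  proof (intro finsum_cong')
    fix k assume k: "k \<in> {..p}"
    show "[(p choose k)] \<cdot> (x [^] k \<otimes> y [^] (p - k)) = (if k = 0 then y [^] p else \<zero>) \<oplus> (if k = p then x [^] p else \<zero>)"
    proof (cases "k = 0 \<or> k = p")
      case True
      then show ?thesis using x y p0 by auto
    next
      case False
      then have "p dvd (p choose k)" using k p by (intro dvd_choose_prime) auto
      then show ?thesis using False x y char_zero_mult[OF ch] by simp
    qed
  qed (use x y in auto)
  also have "\<dots> = (\<Oplus>k\<in>{..p}. (if k = 0 then y [^] p else \<zero>)) \<oplus> (\<Oplus>k\<in>{..p}. (if k = p then x [^] p else \<zero>))"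
    using x y by (subst finsum_addf) auto
  also have "(\<Oplus>k\<in>{..p}. (if k = 0 then y [^] p else \<zero>)) = y [^] p"
    using add.finprod_singleton_swap[of 0 "{..p}" "\<lambda>_. y [^] p"] y by simp
  also have "(\<Oplus>k\<in>{..p}. (if k = p then x [^] p else \<zero>)) = x [^] p"
    using add.finprod_singleton_swap[of p "{..p}" "\<lambda>_. x [^] p"] x by simp
  finally show ?thesis using x y by (simp add: a_comm)
qed

lemma (in cring) frobenius_pow:
  assumes p: "Factorial_Ring.prime p" and ch: "[(p::nat)] \<cdot> \<one> = \<zero>" and x: "x \<in> carrier R" and y: "y \<in> carrier R"
  shows "(x \<oplus> y) [^] (p ^ n) = x [^] (p ^ n) \<oplus> y [^] (p ^ n)"
proof (induction n)
  case 0 then show ?case using x y by simp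
next
  case (Suc n)
  have "(x \<oplus> y) [^] (p ^ Suc n) = ((x \<oplus> y) [^] (p ^ n)) [^] p"
    using x y by (simp add: nat_pow_pow mult.commute)
  also have "\<dots> = (x [^] (p ^ n)) [^] p \<oplus> (y [^] (p ^ n)) [^] p"
    using Suc frobenius[OF p ch] x y by simp
  also have "\<dots> = x [^] (p ^ Suc n) \<oplus> y [^] (p ^ Suc n)"
    using x y by (simp add: nat_pow_pow mult.commute)
  finally show ?case .
qed


lemma hom_add_pow:
  assumes "h \<in> ring_hom A B" "ring A" "ring B" "a \<in> carrier A"
  shows "h ([(n::nat)] \<cdot>\<^bsub>A\<^esub> a) = [n] \<cdot>\<^bsub>B\<^esub> (h a)"
proof (induction n)
  case 0
  interpret A: ring A by fact
  interpret B: ring B by fact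
  show ?case using assms ring_hom_zero[of h A B] by simp
next
  case (Suc n)
  interpret A: ring A by fact
  interpret B: ring B by fact
  have "h ([Suc n] \<cdot>\<^bsub>A\<^esub> a) = h ([n] \<cdot>\<^bsub>A\<^esub> a \<oplus>\<^bsub>A\<^esub> a)" by simp
  also have "\<dots> = h ([n] \<cdot>\<^bsub>A\<^esub> a) \<oplus>\<^bsub>B\<^esub> h a"
    using assms by (intro ring_hom_add) auto
  finally show ?case using Suc by simp
qed

lemma residue_char:
  assumes "Factorial_Ring.prime p"
  shows "[p] \<cdot>\<^bsub>residue_ring (int p)\<^esub> \<one>\<^bsub>residue_ring (int p)\<^esub> = \<zero>\<^bsub>residue_ring (int p)\<^esub>"
proof -
  interpret R: residues_prime p "residue_ring (int p)" using assms by (simp add: residues_prime_def)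
  have "[k] \<cdot>\<^bsub>residue_ring (int p)\<^esub> \<one>\<^bsub>residue_ring (int p)\<^esub> = int k mod int p" for k :: nat
  proof (induction k)
    case 0 then show ?case by (simp add: residue_ring_def add_pow_def nat_pow_def)
  next
    case (Suc k)
    have "[Suc k] \<cdot>\<^bsub>residue_ring (int p)\<^esub> \<one>\<^bsub>residue_ring (int p)\<^esub> = [k] \<cdot>\<^bsub>residue_ring (int p)\<^esub> \<one>\<^bsub>residue_ring (int p)\<^esub> \<oplus>\<^bsub>residue_ring (int p)\<^esub> \<one>\<^bsub>residue_ring (int p)\<^esub>"
      by simp
    then show ?case using Suc by (simp add: residue_ring_def mod_add_left_eq add.commute[of 1])
  qed
  from this[of p] show ?thesis by (simp add: residue_ring_def)
qed

lemma GF_exists: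
  assumes p: "Factorial_Ring.prime p" and n: "n > 0"
  shows "\<exists>F :: (((int list \<times> nat) multiset \<Rightarrow> int) ring). field F \<and> card (carrier F) = p ^ n"
proof -
  define R where "R = residue_ring (int p)"
  have fR: "field R" unfolding R_def using residues_prime.is_field[of p] p
    by (simp add: residues_prime_def)
  interpret R: field R by fact
  obtain L :: "((int list \<times> nat) multiset \<Rightarrow> int) ring"
    where cl: "algebraic_closure L (R.indexed_const ` (carrier R))" and h: "R.indexed_const \<in> ring_hom R L"
    using R.exists_closure by blast
  interpret L: algebraic_closure L "R.indexed_const ` (carrier R)" by fact
  have chL: "[p] \<cdot>\<^bsub>L\<^esub> \<one>\<^bsub>L\<^esub> = \<zero>\<^bsub>L\<^esub>"
  proof -
    have "R.indexed_const ([p] \<cdot>\<^bsub>R\<^esub> \<one>\<^bsub>R\<^esub>) = [p] \<cdot>\<^bsub>L\<^esub> R.indexed_const \<one>\<^bsub>R\<^esub>"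
      by (rule hom_add_pow[OF h R.ring_axioms L.ring_axioms]) auto
    then show ?thesis using residue_char[OF p] h ring_hom_one[OF h] ring_hom_zero[OF h R.ring_axioms L.ring_axioms]
      by (simp add: R_def)
  qed
  define q where "q = p ^ n"
  have p2: "p \<ge> 2" using p prime_ge_2_nat by blast
  have q2: "q \<ge> 2"
  proof -
    have "p ^ 1 \<le> p ^ n" using n p2 by (intro power_increasing) auto
    then show ?thesis using p2 by (simp add: q_def)
  qed
  define K where "K = {x \<in> carrier L. x [^]\<^bsub>L\<^esub> q = x}"
  have frobL: "\<And>x y. x \<in> carrier L \<Longrightarrow> y \<in> carrier L \<Longrightarrow> (x \<oplus>\<^bsub>L\<^esub> y) [^]\<^bsub>L\<^esub> q = x [^]\<^bsub>L\<^esub> q \<oplus>\<^bsub>L\<^esub> y [^]\<^bsub>L\<^esub> q"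
    unfolding q_def using L.frobenius_pow[OF p chL] by blast
  have negpow: "\<And>x. x \<in> carrier L \<Longrightarrow> (\<ominus>\<^bsub>L\<^esub> x) [^]\<^bsub>L\<^esub> q = \<ominus>\<^bsub>L\<^esub> (x [^]\<^bsub>L\<^esub> q)"
  proof -
    fix x assume x: "x \<in> carrier L"
    have "\<zero>\<^bsub>L\<^esub> = (x \<oplus>\<^bsub>L\<^esub> \<ominus>\<^bsub>L\<^esub> x) [^]\<^bsub>L\<^esub> q"
      using x q2 by (simp add: L.r_neg L.nat_pow_zero)
    also have "\<dots> = x [^]\<^bsub>L\<^esub> q \<oplus>\<^bsub>L\<^esub> (\<ominus>\<^bsub>L\<^esub> x) [^]\<^bsub>L\<^esub> q"
      using frobL x by simp
    finally have "(\<ominus>\<^bsub>L\<^esub> x) [^]\<^bsub>L\<^esub> q \<oplus>\<^bsub>L\<^esub> x [^]\<^bsub>L\<^esub> q = \<zero>\<^bsub>L\<^esub>"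
      using x by (simp add: L.a_comm)
    then show "(\<ominus>\<^bsub>L\<^esub> x) [^]\<^bsub>L\<^esub> q = \<ominus>\<^bsub>L\<^esub> (x [^]\<^bsub>L\<^esub> q)"
      using x by (metis L.minus_equality L.nat_pow_closed L.a_inv_closed)
  qed
  have subK: "subring K L"
  proof (rule L.subringI)
    show "K \<subseteq> carrier L" unfolding K_def by auto
    show "\<one>\<^bsub>L\<^esub> \<in> K" unfolding K_def by simp
    show "\<ominus>\<^bsub>L\<^esub> h \<in> K" if "h \<in> K" for h
      using that negpow unfolding K_def by auto
    show "h1 \<otimes>\<^bsub>L\<^esub> h2 \<in> K" if "h1 \<in> K" "h2 \<in> K" for h1 h2
      using that unfolding K_def by (auto simp: L.nat_pow_distrib)
    show "h1 \<oplus>\<^bsub>L\<^esub> h2 \<in> K" if "h1 \<in> K" "h2 \<in> K" for h1 h2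
      using that frobL unfolding K_def by auto
  qed
  have sfK: "subfield K L"
  proof (rule L.subfieldI'[OF subK])
    fix k assume k: "k \<in> K - {\<zero>\<^bsub>L\<^esub>}"
    then have kc: "k \<in> carrier L" and kq: "k [^]\<^bsub>L\<^esub> q = k" and k0: "k \<noteq> \<zero>\<^bsub>L\<^esub>"
      unfolding K_def by auto
    have ku: "k \<in> Units L" using kc k0 L.field_Units by auto
    have ic: "inv\<^bsub>L\<^esub> k \<in> carrier L" using ku by auto
    have "(k \<otimes>\<^bsub>L\<^esub> inv\<^bsub>L\<^esub> k) [^]\<^bsub>L\<^esub> q = \<one>\<^bsub>L\<^esub>"
      using ku by simp
    then have "k \<otimes>\<^bsub>L\<^esub> (inv\<^bsub>L\<^esub> k) [^]\<^bsub>L\<^esub> q = \<one>\<^bsub>L\<^esub>"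
      using kc ic kq by (simp add: L.nat_pow_distrib)
    then have "inv\<^bsub>L\<^esub> k = (inv\<^bsub>L\<^esub> k) [^]\<^bsub>L\<^esub> q"
      using kc ic by (intro L.comm_inv_char) auto
    then show "inv\<^bsub>L\<^esub> k \<in> K" unfolding K_def using ic by auto
  qed
  have fF: "field (L\<lparr>carrier := K\<rparr>)" using L.subfield_iff(2)[OF sfK] .
  define P where "P = poly_ring L"
  interpret P: domain P unfolding P_def using L.univ_poly_is_domain[OF L.carrier_is_subring] .
  have emb: "ring_hom_ring L P L.poly_of_const"
    using L.canonical_embedding_ring_hom[OF L.carrier_is_subring] unfolding P_def by simp
  interpret Emb: ring_hom_ring L P L.poly_of_const by (rule emb)
  have chP: "[p] \<cdot>\<^bsub>P\<^esub> \<one>\<^bsub>P\<^esub> = \<zero>\<^bsub>P\<^esub>"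
  proof -
    have "L.poly_of_const ([p] \<cdot>\<^bsub>L\<^esub> \<one>\<^bsub>L\<^esub>) = [p] \<cdot>\<^bsub>P\<^esub> L.poly_of_const \<one>\<^bsub>L\<^esub>"
      using emb by (intro hom_add_pow[OF _ L.ring_axioms P.ring_axioms]) (auto simp: ring_hom_ring.homh)
    moreover have "L.poly_of_const \<one>\<^bsub>L\<^esub> = \<one>\<^bsub>P\<^esub>" by (simp add: L.poly_of_const_def P_def univ_poly_one)
    moreover have "L.poly_of_const \<zero>\<^bsub>L\<^esub> = \<zero>\<^bsub>P\<^esub>" by (simp add: L.poly_of_const_def P_def univ_poly_zero)
    ultimately show ?thesis using chL by simp
  qed
  define Xv where "Xv = var L"
  have Xc: "Xv \<in> carrier P" unfolding Xv_def P_def using L.var_closed(1)[OF L.carrier_is_subring] .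
  define f where "f = Xv [^]\<^bsub>P\<^esub> q \<ominus>\<^bsub>P\<^esub> Xv"
  have fc: "f \<in> carrier P" unfolding f_def using Xc by simp
  have Xq: "Xv [^]\<^bsub>P\<^esub> q = L.monom \<one>\<^bsub>L\<^esub> q"
    unfolding Xv_def P_def using L.unitary_monom_eq_var_pow[OF L.carrier_is_subring] by simp
  have mX: "\<ominus>\<^bsub>P\<^esub> Xv = [\<ominus>\<^bsub>L\<^esub> \<one>\<^bsub>L\<^esub>, \<zero>\<^bsub>L\<^esub>]"
    using L.univ_poly_a_inv_def'[OF L.carrier_is_subring Xc[unfolded P_def]] unfolding Xv_def var_def P_def
    by simp
  have degf: "degree f = q"
  proof -
    have "f = L.poly_add (L.monom \<one>\<^bsub>L\<^esub> q) [\<ominus>\<^bsub>L\<^esub> \<one>\<^bsub>L\<^esub>, \<zero>\<^bsub>L\<^esub>]"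
      unfolding f_def a_minus_def Xq mX by (simp add: P_def univ_poly_add)
    moreover have "polynomial\<^bsub>L\<^esub> (carrier L) (L.monom \<one>\<^bsub>L\<^esub> q)"
      by (intro L.monom_is_polynomial[OF L.carrier_is_subring]) auto
    moreover have "polynomial\<^bsub>L\<^esub> (carrier L) [\<ominus>\<^bsub>L\<^esub> \<one>\<^bsub>L\<^esub>, \<zero>\<^bsub>L\<^esub>]"
      unfolding polynomial_def by auto
    moreover have "degree (L.monom \<one>\<^bsub>L\<^esub> q) \<noteq> degree [\<ominus>\<^bsub>L\<^esub> \<one>\<^bsub>L\<^esub>, \<zero>\<^bsub>L\<^esub>]"
      using q2 by (simp add: L.monom_def)
    ultimately have "degree f = max (degree (L.monom \<one>\<^bsub>L\<^esub> q)) (degree [\<ominus>\<^bsub>L\<^esub> \<one>\<^bsub>L\<^esub>, \<zero>\<^bsub>L\<^esub>])"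
      by (metis L.poly_add_degree_eq[OF L.carrier_is_subring])
    then show ?thesis using q2 by (simp add: L.monom_def)
  qed
  have fne: "f \<noteq> []" using degf q2 by auto
  have evf: "L.eval f x = x [^]\<^bsub>L\<^esub> q \<ominus>\<^bsub>L\<^esub> x" if x: "x \<in> carrier L" for x
  proof -
    interpret E: ring_hom_ring P L "\<lambda>p. L.eval p x"
      unfolding P_def using L.eval_ring_hom[OF L.carrier_is_subring x] .
    have "L.eval Xv x = x" unfolding Xv_def using L.eval_var[OF x] .
    then show ?thesis unfolding f_def using Xc x by (simp add: a_minus_def E.hom_add E.hom_a_inv E.hom_nat_pow)
  qed
  have rootsK: "{x. L.is_root f x} = K"
    unfolding L.is_root_def K_def using evf fne
    by (auto simp: L.r_right_minus_eq)
  have spl: "size (L.roots f) = q"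
    using L.roots_over_carrier[OF fc[unfolded P_def]] degf unfolding L.splitted_def by simp
  have fc': "f \<in> carrier (poly_ring L)" using fc unfolding P_def .
  have cnt: "count (L.roots f) a \<le> 1" for a
  proof (rule ccontr)
    assume "\<not> count (L.roots f) a \<le> 1"
    then have am: "L.alg_mult f a \<ge> 2" using L.alg_mult_eq_count_roots[OF fc'] by simp
    have a: "a \<in> carrier L" using am unfolding L.alg_mult_def by (auto split: if_splits)
    have "L.is_root f a" using L.alg_mult_gt_zero_iff_is_root[OF fc', of a] am by linarith
    then have aK: "a [^]\<^bsub>L\<^esub> q = a" using rootsK unfolding K_def by auto
    define Y where "Y = [\<one>\<^bsub>L\<^esub>, \<ominus>\<^bsub>L\<^esub> a]"
    have Yc: "Y \<in> carrier P"
      unfolding P_def Y_def univ_poly_carrier[symmetric] polynomial_def using a by auto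
    have Y0: "Y \<noteq> \<zero>\<^bsub>P\<^esub>" unfolding Y_def P_def univ_poly_zero by simp
    have "(Y [^]\<^bsub>P\<^esub> (2::nat)) pdivides\<^bsub>L\<^esub> f"
      using L.le_alg_mult_imp_pdivides[OF a fc' am] unfolding Y_def P_def .
    then obtain g where gc: "g \<in> carrier P" and fg: "f = Y [^]\<^bsub>P\<^esub> (2::nat) \<otimes>\<^bsub>P\<^esub> g"
      unfolding pdivides_def factor_def P_def by auto
    define c where "c = L.poly_of_const (\<ominus>\<^bsub>L\<^esub> a)"
    have cc: "c \<in> carrier P" unfolding c_def using Emb.hom_closed a by simp
    have YXc: "Y = Xv \<oplus>\<^bsub>P\<^esub> c"
      using a by (cases "a = \<zero>\<^bsub>L\<^esub>") (simp_all add: Y_def Xv_def var_def c_def L.poly_of_const_def P_def univ_poly_add)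
    have "c [^]\<^bsub>P\<^esub> q = L.poly_of_const ((\<ominus>\<^bsub>L\<^esub> a) [^]\<^bsub>L\<^esub> q)"
      unfolding c_def using Emb.hom_nat_pow a by simp
    then have cq: "c [^]\<^bsub>P\<^esub> q = c" using negpow[OF a] aK unfolding c_def by simp
    have Yq: "Y [^]\<^bsub>P\<^esub> q = Xv [^]\<^bsub>P\<^esub> q \<oplus>\<^bsub>P\<^esub> c"
      using P.frobenius_pow[OF p chP Xc cc, of n] cq unfolding YXc q_def by simp
    have f2: "f = Y [^]\<^bsub>P\<^esub> q \<ominus>\<^bsub>P\<^esub> Y"
    proof -
      have gen: "u \<ominus>\<^bsub>P\<^esub> v = (u \<oplus>\<^bsub>P\<^esub> w) \<ominus>\<^bsub>P\<^esub> (v \<oplus>\<^bsub>P\<^esub> w)"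
        if "u \<in> carrier P" "v \<in> carrier P" "w \<in> carrier P" for u v w
        using that by algebra
      show ?thesis unfolding Yq unfolding YXc f_def by (rule gen) (use Xc cc in auto)
    qed
    have "Y [^]\<^bsub>P\<^esub> q = Y \<otimes>\<^bsub>P\<^esub> Y [^]\<^bsub>P\<^esub> (q - 1)"
      using P.nat_pow_Suc2[OF Yc, of "q - 1"] q2 by simp
    then have f3: "f = Y \<otimes>\<^bsub>P\<^esub> (Y [^]\<^bsub>P\<^esub> (q - 1) \<ominus>\<^bsub>P\<^esub> \<one>\<^bsub>P\<^esub>)"
    proof -
      have gen: "y \<otimes>\<^bsub>P\<^esub> z \<ominus>\<^bsub>P\<^esub> y = y \<otimes>\<^bsub>P\<^esub> (z \<ominus>\<^bsub>P\<^esub> \<one>\<^bsub>P\<^esub>)"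
        if "y \<in> carrier P" "z \<in> carrier P" for y z
        using that by algebra
      show ?thesis unfolding f2 \<open>Y [^]\<^bsub>P\<^esub> q = Y \<otimes>\<^bsub>P\<^esub> Y [^]\<^bsub>P\<^esub> (q - 1)\<close>
        by (rule gen) (use Yc in auto)
    qed
    have f4: "f = Y \<otimes>\<^bsub>P\<^esub> (Y \<otimes>\<^bsub>P\<^esub> g)"
    proof -
      have "Y [^]\<^bsub>P\<^esub> (2::nat) = Y \<otimes>\<^bsub>P\<^esub> Y" using Yc by (simp add: numeral_2_eq_2)
      then show ?thesis unfolding fg using Yc gc by (simp add: P.m_assoc)
    qed
    have eqq: "Y [^]\<^bsub>P\<^esub> (q - 1) \<ominus>\<^bsub>P\<^esub> \<one>\<^bsub>P\<^esub> = Y \<otimes>\<^bsub>P\<^esub> g"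
      using P.m_lcancel[OF Y0 Yc, of "Y [^]\<^bsub>P\<^esub> (q - 1) \<ominus>\<^bsub>P\<^esub> \<one>\<^bsub>P\<^esub>" "Y \<otimes>\<^bsub>P\<^esub> g"]
        f3 f4 Yc gc by simp
    interpret E: ring_hom_ring P L "\<lambda>p. L.eval p a"
      unfolding P_def using L.eval_ring_hom[OF L.carrier_is_subring a] .
    have eY: "L.eval Y a = \<zero>\<^bsub>L\<^esub>" unfolding Y_def using a by (simp add: L.r_neg)
    have "L.eval (Y [^]\<^bsub>P\<^esub> (q - 1) \<ominus>\<^bsub>P\<^esub> \<one>\<^bsub>P\<^esub>) a = \<ominus>\<^bsub>L\<^esub> \<one>\<^bsub>L\<^esub>"
      using Yc q2 eY by (simp add: a_minus_def E.hom_add E.hom_a_inv E.hom_nat_pow L.nat_pow_zero)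
    moreover have "L.eval (Y \<otimes>\<^bsub>P\<^esub> g) a = \<zero>\<^bsub>L\<^esub>"
      using Yc gc eY by (simp add: E.hom_mult)
    ultimately have "\<ominus>\<^bsub>L\<^esub> \<one>\<^bsub>L\<^esub> = \<zero>\<^bsub>L\<^esub>" using eqq by simp
    then have "\<one>\<^bsub>L\<^esub> = \<zero>\<^bsub>L\<^esub>" using L.minus_minus[of "\<one>\<^bsub>L\<^esub>"] L.minus_zero by simp
    then show False by simp
  qed
  have "L.roots f = mset_set (set_mset (L.roots f))"
  proof (rule multiset_eqI)
    fix a show "count (L.roots f) a = count (mset_set (set_mset (L.roots f))) a"
      using cnt[of a] count_greater_zero_iff[of "L.roots f" a] by (auto simp: count_mset_set' simp del: count_greater_zero_iff)
  qed
  then have "size (L.roots f) = card (set_mset (L.roots f))" by (metis size_mset_set)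
  moreover have "set_mset (L.roots f) = K"
    using L.roots_mem_iff_is_root[OF fc[unfolded P_def]] rootsK by auto
  ultimately have "card K = q" using spl by simp
  then show ?thesis using fF by (intro exI[of _ "L\<lparr>carrier := K\<rparr>"]) (simp add: q_def)
qed



lemma card_set_mset_le_size: "card (set_mset M) \<le> size M"
  using size_mset_mono[OF mset_set_set_mset_msubset[of M]] by simp

context field
begin

lemma eval_Cons: "eval (a # p) x = a \<otimes> x [^] length p \<oplus> eval p x"
  by simp

lemma eval_map2_minus:
  assumes "length cs = length ds" "set cs \<subseteq> carrier R" "set ds \<subseteq> carrier R" "x \<in> carrier R"
  shows "eval (map2 (\<lambda>a b. a \<ominus> b) cs ds) x = eval cs x \<ominus> eval ds x"
  using assms(1-3)
proof (induction cs ds rule: list_induct2)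
  case Nil then show ?case by (simp add: a_minus_def)
next
  case (Cons a cs b ds)
  have gen: "(u \<ominus> v) \<otimes> y \<oplus> (e1 \<ominus> e2) = (u \<otimes> y \<oplus> e1) \<ominus> (v \<otimes> y \<oplus> e2)"
    if "u \<in> carrier R" "v \<in> carrier R" "y \<in> carrier R" "e1 \<in> carrier R" "e2 \<in> carrier R" for u v y e1 e2
    using that by algebra
  have l: "length (map2 (\<lambda>a b. a \<ominus> b) cs ds) = length cs" using Cons by simp
  have IH: "eval (map2 (\<lambda>a b. a \<ominus> b) cs ds) x = eval cs x \<ominus> eval ds x" using Cons by simp
  have "eval (map2 (\<lambda>a b. a \<ominus> b) (a # cs) (b # ds)) x = (a \<ominus> b) \<otimes> x [^] length cs \<oplus> eval (map2 (\<lambda>a b. a \<ominus> b) cs ds) x"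
    using l by simp
  also have "\<dots> = (a \<otimes> x [^] length cs \<oplus> eval cs x) \<ominus> (b \<otimes> x [^] length cs \<oplus> eval ds x)"
    unfolding IH using Cons assms(4) by (intro gen) (auto intro!: eval_in_carrier)
  finally show ?case by (simp only: eval_Cons Cons(1))
qed

lemma normalize_map2_nil:
  assumes "length cs = length ds" "set cs \<subseteq> carrier R" "set ds \<subseteq> carrier R"
    and "normalize (map2 (\<lambda>a b. a \<ominus> b) cs ds) = []"
  shows "cs = ds"
  using assms
proof (induction cs ds rule: list_induct2)
  case Nil then show ?case by simp
next
  case (Cons a cs b ds)
  then have "a \<ominus> b = \<zero>" by (auto split: if_splits)
  then have "a = b" using Cons by (simp add: r_right_minus_eq)
  moreover have "normalize (map2 (\<lambda>a b. a \<ominus> b) cs ds) = []" using Cons \<open>a \<ominus> b = \<zero>\<close> by simp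
  ultimately show ?case using Cons by simp
qed

lemma root_bound:
  assumes len: "length cs = length ds" and cs: "set cs \<subseteq> carrier R" and ds: "set ds \<subseteq> carrier R"
    and ne: "cs \<noteq> ds"
  shows "card {x \<in> carrier R. eval cs x = eval ds x} \<le> length cs - 1"
    and "cs \<noteq> [] \<Longrightarrow> hd cs = hd ds \<Longrightarrow> card {x \<in> carrier R. eval cs x = eval ds x} \<le> length cs - 2"
proof -
  define D where "D = map2 (\<lambda>a b. a \<ominus> b) cs ds"
  have Dc: "set D \<subseteq> carrier R" unfolding D_def using len cs ds
    by (induction cs ds rule: list_induct2) auto
  define z where "z = normalize D"
  have zc: "z \<in> carrier (poly_ring R)"
    unfolding z_def using normalize_gives_polynomial[OF Dc] univ_poly_carrier by blast
  have zne: "z \<noteq> []" unfolding z_def D_def using normalize_map2_nil[OF len cs ds] ne by blast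
  have ev: "eval z x = eval cs x \<ominus> eval ds x" if "x \<in> carrier R" for x
    unfolding z_def using eval_normalize[OF Dc that] eval_map2_minus[OF len cs ds that] D_def by simp
  have eqset: "{x \<in> carrier R. eval cs x = eval ds x} = set_mset (roots z)"
  proof -
    have "{x \<in> carrier R. eval cs x = eval ds x} = {x. is_root z x}"
    proof (rule equalityI; rule subsetI)
      fix x assume "x \<in> {x \<in> carrier R. eval cs x = eval ds x}"
      then have x: "x \<in> carrier R" and e: "eval cs x = eval ds x" by auto
      have "eval z x = \<zero>" using ev[OF x] e eval_in_carrier[OF ds x] by simp
      then show "x \<in> {x. is_root z x}" unfolding is_root_def using x zne by simp
    next
      fix x assume "x \<in> {x. is_root z x}"
      then have x: "x \<in> carrier R" and e: "eval z x = \<zero>" unfolding is_root_def by auto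
      then have "eval cs x \<ominus> eval ds x = \<zero>" using ev[OF x] by simp
      then have "eval cs x = eval ds x"
        using r_right_minus_eq eval_in_carrier[OF ds x] eval_in_carrier[OF cs x] by blast
      then show "x \<in> {x \<in> carrier R. eval cs x = eval ds x}" using x by simp
    qed
    then show ?thesis using roots_mem_iff_is_root[OF zc] by auto
  qed
  have cb: "card {x \<in> carrier R. eval cs x = eval ds x} \<le> degree z"
    unfolding eqset using card_set_mset_le_size[of "roots z"] size_roots_le_degree[OF zc] by linarith
  have lD: "length D = length cs" unfolding D_def using len by simp
  show "card {x \<in> carrier R. eval cs x = eval ds x} \<le> length cs - 1"
    using cb normalize_length_le[of D] lD unfolding z_def by linarith
  assume cne: "cs \<noteq> []" and hd: "hd cs = hd ds"
  obtain a cs' where cs': "cs = a # cs'" using cne by (cases cs) auto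
  obtain b ds' where ds': "ds = b # ds'" using len cne by (cases ds) auto
  have "a = b" using hd cs' ds' by simp
  then have "D = \<zero> # map2 (\<lambda>a b. a \<ominus> b) cs' ds'" unfolding D_def cs' ds' using cs cs' by simp
  then have "z = normalize (map2 (\<lambda>a b. a \<ominus> b) cs' ds')" unfolding z_def by simp
  then have "length z \<le> length cs'" using normalize_length_le[of "map2 (\<lambda>a b. a \<ominus> b) cs' ds'"] len cs' ds' by simp
  then show "card {x \<in> carrier R. eval cs x = eval ds x} \<le> length cs - 2"
    using cb cs' by simp
qed


lemma code_exists:
  assumes cq: "card (carrier R) = q" and t2: "2 \<le> t" and tq: "t < q"
  shows "\<exists>W :: (nat \<Rightarrow> nat) set. finite W \<and> card W = q ^ t \<and> (\<forall>w\<in>W. \<forall>i\<le>q. w i < q) \<and>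
           (\<forall>w\<in>W. \<forall>w'\<in>W. w \<noteq> w' \<longrightarrow> card {i\<in>{..q}. w i = w' i} \<le> t - 1)"
proof -
  let ?C = "carrier R"
  have "q > 0" using tq by simp
  then have finC: "finite ?C" using cq card.infinite by force
  obtain e where e: "bij_betw e ?C {0..<q}" using ex_bij_betw_finite_nat[OF finC] cq by auto
  define e' where "e' = the_inv_into ?C e"
  have einj: "inj_on e ?C" using e bij_betw_def by auto
  have e'C: "i < q \<Longrightarrow> e' i \<in> ?C" for i
    unfolding e'_def using e by (metis atLeastLessThan_iff bij_betw_def the_inv_into_into subset_refl zero_le)
  have ee': "i < q \<Longrightarrow> e (e' i) = i" for i
    unfolding e'_def using e by (metis atLeastLessThan_iff bij_betw_def f_the_inv_into_f zero_le)
  have eC: "x \<in> ?C \<Longrightarrow> e x < q" for x using e by (auto simp: bij_betw_def)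
  define Ls where "Ls = {cs. set cs \<subseteq> ?C \<and> length cs = t}"
  have cardLs: "card Ls = q ^ t" unfolding Ls_def using card_lists_length_eq[OF finC] cq by simp
  have finLs: "finite Ls" unfolding Ls_def using finite_lists_length_eq[OF finC] by simp
  define w where "w = (\<lambda>cs i. if i < q then e (eval cs (e' i)) else e (hd cs))"
  have rng: "\<forall>i\<le>q. w cs i < q" if "cs \<in> Ls" for cs
  proof (intro allI impI)
    fix i assume "i \<le> q"
    have cs: "set cs \<subseteq> ?C" "length cs = t" using that unfolding Ls_def by auto
    then have "cs \<noteq> []" using t2 by auto
    then have "hd cs \<in> ?C" using cs by auto
    then show "w cs i < q" unfolding w_def using cs e'C eval_in_carrier eC by auto
  qed
  have agree: "card {i\<in>{..q}. w cs i = w ds i} \<le> t - 1"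
    if cs: "cs \<in> Ls" and ds: "ds \<in> Ls" and ne: "cs \<noteq> ds" for cs ds
  proof -
    have csC: "set cs \<subseteq> ?C" and lc: "length cs = t" using cs unfolding Ls_def by auto
    have dsC: "set ds \<subseteq> ?C" and ld: "length ds = t" using ds unfolding Ls_def by auto
    have cne: "cs \<noteq> []" using lc t2 by auto
    have dne: "ds \<noteq> []" using ld t2 by auto
    define Z where "Z = {x \<in> ?C. eval cs x = eval ds x}"
    have finZ: "finite Z" unfolding Z_def using finC by simp
    have sub: "{i\<in>{..q}. w cs i = w ds i} \<subseteq> e ` Z \<union> (if hd cs = hd ds then {q} else {})"
    proof
      fix i assume i: "i \<in> {i\<in>{..q}. w cs i = w ds i}"
      show "i \<in> e ` Z \<union> (if hd cs = hd ds then {q} else {})"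
      proof (cases "i < q")
        case True
        then have "e (eval cs (e' i)) = e (eval ds (e' i))" using i unfolding w_def by simp
        then have "eval cs (e' i) = eval ds (e' i)"
          using einj eval_in_carrier[OF csC e'C[OF True]] eval_in_carrier[OF dsC e'C[OF True]]
          by (auto dest: inj_onD)
        then have "e' i \<in> Z" unfolding Z_def using e'C[OF True] by simp
        then show ?thesis using ee'[OF True] by (metis UnI1 image_eqI)
      next
        case False
        then have iq: "i = q" using i by auto
        then have "e (hd cs) = e (hd ds)" using i unfolding w_def by simp
        moreover have "hd cs \<in> ?C" "hd ds \<in> ?C" using cne dne csC dsC by auto
        ultimately have "hd cs = hd ds" using einj by (auto dest: inj_onD)
        then show ?thesis using iq by simp
      qed
    qed
    have "card {i\<in>{..q}. w cs i = w ds i} \<le> card (e ` Z \<union> (if hd cs = hd ds then {q} else {}))"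
      using sub finZ by (intro card_mono) auto
    also have "\<dots> \<le> card (e ` Z) + card (if hd cs = hd ds then {q} else ({}::nat set))"
      by (rule card_Un_le)
    also have "\<dots> \<le> card Z + (if hd cs = hd ds then 1 else 0)"
      using card_image_le[OF finZ, of e] by auto
    also have "\<dots> \<le> t - 1"
    proof (cases "hd cs = hd ds")
      case True
      then have "card Z \<le> length cs - 2" unfolding Z_def
        using root_bound(2)[OF _ csC dsC ne cne] lc ld by simp
      then show ?thesis using True lc t2 by simp
    next
      case False
      then have "card Z \<le> length cs - 1" unfolding Z_def
        using root_bound(1)[OF _ csC dsC ne] lc ld by simp
      then show ?thesis using False lc by simp
    qed
    finally show ?thesis .
  qed
  have winj: "inj_on w Ls"
  proof (rule inj_onI, rule ccontr)
    fix cs ds assume cs: "cs \<in> Ls" and ds: "ds \<in> Ls" and eq: "w cs = w ds" and ne: "cs \<noteq> ds"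
    have "{i\<in>{..q}. w cs i = w ds i} = {..q}" using eq by auto
    then have "q + 1 \<le> t - 1" using agree[OF cs ds ne] by simp
    then show False using tq by simp
  qed
  show ?thesis
  proof (intro exI[of _ "w ` Ls"] conjI)
    show "finite (w ` Ls)" using finLs by simp
    show "card (w ` Ls) = q ^ t" using card_image[OF winj] cardLs by simp
    show "\<forall>x\<in>w ` Ls. \<forall>i\<le>q. x i < q" using rng by auto
    show "\<forall>x\<in>w ` Ls. \<forall>w'\<in>w ` Ls. x \<noteq> w' \<longrightarrow> card {i \<in> {..q}. x i = w' i} \<le> t - 1"
      using agree by auto
  qed
qed

end



lemma enc_inj:
  fixes q i j a b :: nat
  assumes "a < q" "b < q" "i * q + a = j * q + b"
  shows "i = j \<and> a = b"
proof -
  have 1: "(i * q + a) div q = i" "(i * q + a) mod q = a" using assms(1) by auto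
  have 2: "(j * q + b) div q = j" "(j * q + b) mod q = b" using assms(2) by auto
  have "i = j" using 1(1) 2(1) assms(3) by simp
  moreover have "a = b" using 1(2) 2(2) assms(3) by simp
  ultimately show ?thesis by simp
qed

lemma cff_from_code:
  fixes W :: "(nat \<Rightarrow> nat) set" and q lam r d :: nat
  assumes fin: "finite W"
    and rng: "\<forall>w\<in>W. \<forall>i\<le>q. w i < q"
    and agree: "\<forall>w\<in>W. \<forall>w'\<in>W. w \<noteq> w' \<longrightarrow> card {i\<in>{..q}. w i = w' i} \<le> lam"
    and lamq: "lam < q + 1"
    and bound: "r * lam + d \<le> q"
  shows "cff r d {..<q^2+q} ((\<lambda>w. (\<lambda>i. i*q + w i) ` {..q}) ` W) (q^2+q) (card W)"
proof -
  define B where "B = (\<lambda>w. (\<lambda>i. i*q + w i) ` {..q})"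
  have injw: "inj_on (\<lambda>i. i*q + w i) {..q}" if "w \<in> W" for w
  proof (rule inj_onI)
    fix i j assume i: "i \<in> {..q}" and j: "j \<in> {..q}" and eq: "i*q + w i = j*q + w j"
    have "w i < q" "w j < q" using rng that i j by auto
    then show "i = j" using enc_inj[OF _ _ eq] by blast
  qed
  have cardB: "card (B w) = q + 1" if "w \<in> W" for w
    unfolding B_def using card_image[OF injw[OF that]] by simp
  have inter: "card (B w \<inter> B w') \<le> lam" if "w \<in> W" "w' \<in> W" "w \<noteq> w'" for w w'
  proof -
    have "B w \<inter> B w' \<subseteq> (\<lambda>i. i*q + w i) ` {i\<in>{..q}. w i = w' i}"
    proof
      fix x assume "x \<in> B w \<inter> B w'"
      then obtain i j where i: "i \<le> q" "x = i*q + w i" and j: "j \<le> q" "x = j*q + w' j"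
        unfolding B_def by auto
      then have "i = j \<and> w i = w' j" using enc_inj[of "w i" q "w' j" i j] rng that by auto
      then show "x \<in> (\<lambda>i. i*q + w i) ` {i\<in>{..q}. w i = w' i}" using i by auto
    qed
    then have "card (B w \<inter> B w') \<le> card ((\<lambda>i. i*q + w i) ` {i\<in>{..q}. w i = w' i})"
      by (intro card_mono) auto
    also have "\<dots> \<le> card {i\<in>{..q}. w i = w' i}" by (rule card_image_le) auto
    moreover have "card {i\<in>{..q}. w i = w' i} \<le> lam" using agree that by blast
    ultimately show ?thesis by linarith
  qed
  have injB: "inj_on B W"
  proof (rule inj_onI, rule ccontr)
    fix w w' assume w: "w \<in> W" and w': "w' \<in> W" and eq: "B w = B w'" and ne: "w \<noteq> w'"
    have "card (B w \<inter> B w') = q + 1" using eq cardB[OF w] by simp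
    then show False using inter[OF w w' ne] lamq by simp
  qed
  have sub: "B w \<subseteq> {..<q^2+q}" if "w \<in> W" for w
  proof
    fix x assume "x \<in> B w"
    then obtain i where i: "i \<le> q" "x = i*q + w i" unfolding B_def by auto
    have "w i < q" using rng that i by auto
    then have "x < i*q + q" using i by simp
    also have "i*q + q = (i+1)*q" by simp
    also have "\<dots> \<le> (q+1)*q" using i by (intro mult_right_mono) auto
    also have "\<dots> = q^2+q" by (simp add: power2_eq_square algebra_simps)
    finally show "x \<in> {..<q^2+q}" by simp
  qed
  show ?thesis unfolding cff_def B_def[symmetric]
  proof (intro conjI ballI allI impI)
    show "finite {..<q^2+q}" by simp
    show "card {..<q^2+q} = q^2+q" by simp
    show "card (B ` W) = card W" using card_image[OF injB] .
    fix Xb assume "Xb \<in> B ` W" then show "Xb \<subseteq> {..<q^2+q}" using sub by auto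
  next
    fix B0 A assume B0: "B0 \<in> B ` W" and A: "\<forall>j<r. A j \<in> B ` W - {B0}"
    obtain w0 where w0: "w0 \<in> W" "B0 = B w0" using B0 by auto
    have Aj: "card (B0 \<inter> A j) \<le> lam" if "j < r" for j
    proof -
      have Aj: "A j \<in> B ` W - {B0}" using A that by blast
      then obtain wj where wj: "wj \<in> W" "A j = B wj" by auto
      have "wj \<noteq> w0" using Aj wj w0 by auto
      then show ?thesis using inter[OF w0(1) wj(1)] wj w0 by auto
    qed
    have finB0: "finite B0" using w0 unfolding B_def by simp
    have e1: "B0 \<inter> (\<Union>j<r. A j) = (\<Union>j<r. B0 \<inter> A j)" by blast
    have e2: "card (\<Union>j<r. B0 \<inter> A j) \<le> (\<Sum>j<r. card (B0 \<inter> A j))" by (rule card_UN_le) simp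
    have e3: "(\<Sum>j<r. card (B0 \<inter> A j)) \<le> (\<Sum>j<(r::nat). lam)" by (rule sum_mono) (rule Aj, simp)
    have ci: "card (B0 \<inter> (\<Union>j<r. A j)) \<le> r * lam" using e1 e2 e3 by simp
    have cd: "card (B0 - (\<Union>j<r. A j)) = card B0 - card (B0 \<inter> (\<Union>j<r. A j))"
      by (rule card_Diff_subset_Int) (use finB0 in blast)
    have cB0: "card B0 = q + 1" using cardB[OF w0(1)] w0(2) by simp
    show "d < card (B0 - (\<Union>j<r. A j))" unfolding cd cB0 using ci bound by linarith
  qed
qed


no_notation var (\<open>X\<index>\<close>)

theorem mainTheorem5:
  fixes q t d :: nat
  assumes "primepow q" and "2 \<le> t" and "t < q" and "d \<le> q"
  shows "\<exists>(X :: nat set) F. cff (nat \<lfloor>(real q - real d) / (real t - 1)\<rfloor>) d X F (q^2 + q) (q^t)"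
proof -
  obtain p k where p: "Factorial_Ring.prime p" and k: "k > 0" and qpk: "q = p ^ k"
    using assms(1) unfolding primepow_def by auto
  obtain F :: "((int list \<times> nat) multiset \<Rightarrow> int) ring" where fF: "field F" and cF: "card (carrier F) = q"
    using GF_exists[OF p k] qpk by auto
  obtain W :: "(nat \<Rightarrow> nat) set" where W: "finite W" "card W = q ^ t" "\<forall>w\<in>W. \<forall>i\<le>q. w i < q"
      "\<forall>w\<in>W. \<forall>w'\<in>W. w \<noteq> w' \<longrightarrow> card {i\<in>{..q}. w i = w' i} \<le> t - 1"
    using field.code_exists[OF fF cF assms(2) assms(3)] by blast
  define x where "x = (real q - real d) / (real t - 1)"
  define r where "r = nat \<lfloor>x\<rfloor>"
  have tpos: "real t - 1 > 0" using assms(2) by simp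
  have x0: "x \<ge> 0" unfolding x_def using assms(4) tpos by simp
  have "real r = of_int \<lfloor>x\<rfloor>" unfolding r_def using x0 by simp
  then have "real r \<le> x" by simp
  then have "real r * (real t - 1) \<le> real q - real d"
    unfolding x_def using tpos by (simp add: pos_le_divide_eq)
  moreover have "real (r * (t - 1)) = real r * (real t - 1)"
  proof -
    have "real (t - 1) = real t - 1" using assms(2) by (simp add: of_nat_diff)
    then show ?thesis by (simp only: of_nat_mult)
  qed
  ultimately have "real (r * (t - 1)) + real d \<le> real q" by linarith
  then have bound: "r * (t - 1) + d \<le> q" by (metis of_nat_add of_nat_le_iff)
  have "cff r d {..<q^2+q} ((\<lambda>w. (\<lambda>i. i*q + w i) ` {..q}) ` W) (q^2+q) (card W)"
    by (rule cff_from_code[OF W(1) W(3) W(4) _ bound]) (use assms(3) in simp)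
  then show ?thesis unfolding r_def x_def W(2) by blast
qed

end
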